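(* Let $K$ be a compact Hausdorff space without isolated points and let $X$ be a closed subspace of $C(K)$. The following are equivalent: (a) The pair $(X,C(K))$ has the Daugavet property. (b) For every $\varepsilon>0$, every $x^*\in S(X^* )$ and every nonempty open set $U\subset K$ there is a point $u\in U$ with $\|x^*+\delta_u^*|_X\|>2-\varepsilon$. (c) For every $x^*\in S(X^* )$ and every nonempty open set $U\subset K$ there is a nonempty closed $G_\delta$-set $G\subset U$ such that $\|x^*+\delta_u^*|_X\|=2$ for every $u\in G$.
   Context: $C(K)$ is the space of real continuous functions on $K$ with the sup norm. For $k\in K$, $\delta_k^*\in C(K)^*$ is the evaluation functional $\delta_k^*(f)=f(k)$, and $\delta_k^*|_X$ its restriction to $X$. $S(X^* )$ is the unit sphere of $X^*$. If $X$ is a closed subspace of a Banach space $Y$ with inclusion $J$, the pair $(X,Y)$ has the Daugavet property if every bounded rank-one linear operator $T:X\to Y$ satisfies $\|J+T\|=1+\|T\|$. *)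

theory Defs
  imports "HOL-Analysis.Analysis"
begin

text \<open>C(K) is modelled by the type of bounded continuous real functions on K
  with the sup norm; for compact K this is exactly C(K).\<close>

definition linear_on_sub :: "'v::real_vector set \<Rightarrow> ('v \<Rightarrow> 'w::real_vector) \<Rightarrow> bool" where
  "linear_on_sub X T \<longleftrightarrow>
     (\<forall>x\<in>X. \<forall>y\<in>X. \<forall>a b::real. T (a *\<^sub>R x + b *\<^sub>R y) = a *\<^sub>R T x + b *\<^sub>R T y)"

definition bounded_linear_on_sub :: "'v::real_normed_vector set \<Rightarrow> ('v \<Rightarrow> 'w::real_normed_vector) \<Rightarrow> bool" where
  "bounded_linear_on_sub X T \<longleftrightarrow>
     linear_on_sub X T \<and> (\<exists>B. \<forall>x\<in>X. norm (T x) \<le> B * norm x)"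

definition opnorm_on :: "'v::real_normed_vector set \<Rightarrow> ('v \<Rightarrow> 'w::real_normed_vector) \<Rightarrow> real" where
  "opnorm_on X T = Sup {norm (T x) | x. x \<in> X \<and> norm x \<le> 1}"

text \<open>Elements of the dual X* are represented by bounded linear functionals on X
  (values outside X are irrelevant); their norm is the dual norm.\<close>
abbreviation dual_norm :: "'v::real_normed_vector set \<Rightarrow> ('v \<Rightarrow> real) \<Rightarrow> real" where
  "dual_norm X \<phi> \<equiv> opnorm_on X \<phi>"

definition dual_sphere :: "'v::real_normed_vector set \<Rightarrow> ('v \<Rightarrow> real) set" where
  "dual_sphere X = {\<phi>. bounded_linear_on_sub X \<phi> \<and> dual_norm X \<phi> = 1}"

text \<open>Evaluation functional delta k (restricted to X when used with dual_norm X).\<close>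
definition delta_eval :: "'a::topological_space \<Rightarrow> ('a \<Rightarrow>\<^sub>C real) \<Rightarrow> real" where
  "delta_eval k f = apply_bcontfun f k"

definition rank_one_op :: "'v::real_normed_vector set \<Rightarrow> ('v \<Rightarrow> 'w::real_normed_vector) \<Rightarrow> bool" where
  "rank_one_op X T \<longleftrightarrow> bounded_linear_on_sub X T \<and> dim (T ` X) = 1"

text \<open>Daugavet property of the pair (X, Y), X a closed subspace of Y, J the inclusion.\<close>
definition daugavet_pair :: "'v::real_normed_vector set \<Rightarrow> bool" where
  "daugavet_pair X \<longleftrightarrow>
     (\<forall>T::'v \<Rightarrow> 'v. rank_one_op X T \<longrightarrow> opnorm_on X (\<lambda>x. x + T x) = 1 + opnorm_on X T)"

definition gdelta_set :: "'a::topological_space set \<Rightarrow> bool" where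
  "gdelta_set G \<longleftrightarrow> (\<exists>\<F>. countable \<F> \<and> (\<forall>V\<in>\<F>. open V) \<and> G = \<Inter>\<F>)"

end

theory Submission
  imports Defs
begin


lemma opnorm_ub:
  assumes "subspace X" "\<And>x. x\<in>X \<Longrightarrow> norm x \<le> 1 \<Longrightarrow> norm (T x) \<le> M"
  shows "opnorm_on X T \<le> M"
  unfolding opnorm_on_def
  by (rule cSup_least) (use subspace_0[OF assms(1)] assms(2) in auto)

lemma opnorm_lb:
  assumes "\<And>x. x\<in>X \<Longrightarrow> norm x \<le> 1 \<Longrightarrow> norm (T x) \<le> M" "x \<in> X" "norm x \<le> 1"
  shows "norm (T x) \<le> opnorm_on X T"
  unfolding opnorm_on_def
  by (rule cSup_upper) (use assms in \<open>auto intro!: bdd_aboveI[of _ M]\<close>)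

lemma opnorm_approx:
  assumes "subspace X" "\<And>x. x\<in>X \<Longrightarrow> norm x \<le> 1 \<Longrightarrow> norm (T x) \<le> M" "e > 0"
  obtains x where "x\<in>X" "norm x \<le> 1" "norm (T x) > opnorm_on X T - e"
proof -
  let ?S = "{norm (T x) | x. x \<in> X \<and> norm x \<le> 1}"
  have ne: "?S \<noteq> {}" using subspace_0[OF assms(1)] by auto
  have bdd: "bdd_above ?S" using assms(2) by (auto intro!: bdd_aboveI[of _ M])
  have "opnorm_on X T - e < Sup ?S" using assms(3) by (simp add: opnorm_on_def)
  then obtain s where "s \<in> ?S" "opnorm_on X T - e < s" using less_cSup_iff[OF ne bdd] by blast
  then show ?thesis using that by auto
qed

lemma lin_zero: "linear_on_sub X T \<Longrightarrow> 0 \<in> X \<Longrightarrow> T 0 = 0"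
  unfolding linear_on_sub_def by (metis scale_zero_left add_0)

lemma lin_scale: "linear_on_sub X T \<Longrightarrow> x \<in> X \<Longrightarrow> T (c *\<^sub>R x) = c *\<^sub>R T x"
  unfolding linear_on_sub_def by (metis scale_zero_left add_0 add.right_neutral)

lemma bl_M:
  assumes "bounded_linear_on_sub X T"
  obtains M where "\<And>x. x\<in>X \<Longrightarrow> norm x \<le> 1 \<Longrightarrow> norm (T x) \<le> M"
proof -
  obtain B where B: "\<forall>x\<in>X. norm (T x) \<le> B * norm x" using assms unfolding bounded_linear_on_sub_def by blast
  have "norm (T x) \<le> max B 0" if "x\<in>X" "norm x \<le> 1" for x
  proof -
    have "B * norm x \<le> max B 0" using that
      by (metis max.cobounded1 max.cobounded2 mult_left_le mult_right_mono norm_ge_zero order_trans mult.commute)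
    then show ?thesis using B that by force
  qed
  then show ?thesis using that by blast
qed

lemma opnorm_nonneg:
  assumes "subspace X" "bounded_linear_on_sub X T"
  shows "0 \<le> opnorm_on X T"
proof -
  obtain M where M: "\<And>x. x\<in>X \<Longrightarrow> norm x \<le> 1 \<Longrightarrow> norm (T x) \<le> M" using bl_M[OF assms(2)] by blast
  have "norm (T 0) \<le> opnorm_on X T" by (rule opnorm_lb[OF M]) (use subspace_0[OF assms(1)] in auto)
  moreover have "T 0 = 0" using lin_zero[of X T] assms subspace_0[OF assms(1)]
    by (simp add: bounded_linear_on_sub_def)
  ultimately show ?thesis by simp
qed

lemma bl_bound:
  assumes "subspace X" "bounded_linear_on_sub X T" "x \<in> X"
  shows "norm (T x) \<le> opnorm_on X T * norm x"
proof (cases "x = 0")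
  case True
  then show ?thesis using lin_zero[of X T] assms subspace_0[OF assms(1)]
    by (simp add: bounded_linear_on_sub_def)
next
  case False
  obtain M where M: "\<And>x. x\<in>X \<Longrightarrow> norm x \<le> 1 \<Longrightarrow> norm (T x) \<le> M" using bl_M[OF assms(2)] by blast
  let ?z = "(1 / norm x) *\<^sub>R x"
  have z: "?z \<in> X" using assms subspace_scale by blast
  have nz: "norm ?z = 1" using False by simp
  have "T ?z = (1 / norm x) *\<^sub>R T x" using lin_scale assms unfolding bounded_linear_on_sub_def by blast
  then have "norm (T ?z) = norm (T x) / norm x" by simp
  have nz1: "norm ?z \<le> 1" using nz by simp
  have "norm (T ?z) \<le> opnorm_on X T" by (rule opnorm_lb[OF M z nz1])
  moreover note \<open>norm (T ?z) = norm (T x) / norm x\<close>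
  ultimately show ?thesis using False by (simp add: divide_le_eq)
qed



lemma normal_K:
  assumes "compact (UNIV :: 'a::t2_space set)"
  shows "normal_space (euclidean :: 'a topology)"
proof (rule compact_Hausdorff_or_regular_imp_normal_space)
  show "compact_space (euclidean :: 'a topology)"
    unfolding compact_space_def using assms by simp
  show "Hausdorff_space (euclidean :: 'a topology) \<or> regular_space (euclidean :: 'a topology)"
    apply (rule disjI1)
    unfolding Hausdorff_space_def disjnt_def using separation_t2 by (metis open_openin)
qed

lemma regK:
  fixes p :: "'a::t2_space"
  assumes "compact (UNIV :: 'a set)" "open Ov" "p \<in> Ov"
  obtains W where "open W" "p \<in> W" "closure W \<subseteq> Ov"
proof -
  have c: "closedin euclidean {p} \<and> closedin euclidean (- Ov) \<and> disjnt {p} (- Ov)" using assms closed_closedin by (auto simp: disjnt_def)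
  have "\<exists>U V. openin euclidean U \<and> openin euclidean V \<and> {p} \<subseteq> U \<and> - Ov \<subseteq> V \<and> disjnt U V"
    using normal_K[OF assms(1)] c unfolding normal_space_def by blast
  then obtain U V where "openin euclidean U" "openin euclidean V" "{p} \<subseteq> U" "- Ov \<subseteq> V" "disjnt U V"
    by blast
  then have "open U" "open V" "p \<in> U" "U \<subseteq> - V" "-V \<subseteq> Ov" by (auto simp: disjnt_def)
  moreover have "closure U \<subseteq> - V" using \<open>open V\<close> \<open>U \<subseteq> - V\<close> by (simp add: closure_minimal open_closed)
  ultimately show ?thesis using that by blast
qed

lemma urysohnK:
  fixes p :: "'a::t2_space"
  assumes "compact (UNIV :: 'a set)" "open U" "p \<in> U"
  obtains y :: "'a \<Rightarrow>\<^sub>C real" where "\<And>t. 0 \<le> y t" "\<And>t. y t \<le> 1" "y p = 1" "\<And>t. t \<notin> U \<Longrightarrow> y t = 0"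
proof -
  have c1: "closedin euclidean (- U)" and c2: "closedin euclidean {p}" using assms closed_closedin by auto
  have dj: "disjnt (- U) {p}" using assms by auto
  obtain f :: "'a \<Rightarrow> real" where f: "continuous_map euclidean (top_of_set {0..1}) f" "f ` (- U) \<subseteq> {0}" "f ` {p} \<subseteq> {1}"
    by (rule Urysohn_lemma[OF normal_K[OF assms(1)] c1 c2 dj zero_le_one])
  have "continuous_map euclidean euclideanreal f" using f(1) continuous_map_in_subtopology by blast
  then have cf: "continuous_on UNIV f" by simp
  have f01: "f t \<in> {0..1}" for t using f(1) unfolding continuous_map_def by auto
  have fb: "f \<in> bcontfun" by (rule bcontfun_normI[OF cf, of 1]) (use f01 in auto)
  define y where "y = Bcontfun f"
  have yf: "apply_bcontfun y = f" unfolding y_def using fb by (simp add: Bcontfun_inverse)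
  show ?thesis
    by (rule that[of y]) (use f01 f(2,3) in \<open>auto simp: yf\<close>)
qed



lemma N_bound:
  assumes "subspace X" "\<phi> \<in> dual_sphere X" "f \<in> X" "norm f \<le> 1"
  shows "norm (\<phi> f + delta_eval u f) \<le> 2"
proof -
  have "norm (\<phi> f) \<le> 1 * norm f" using bl_bound[OF assms(1), of \<phi> f] assms unfolding dual_sphere_def by auto
  moreover have "norm (delta_eval u f) \<le> norm f" unfolding delta_eval_def by (rule norm_bounded)
  ultimately show ?thesis using assms(4) norm_triangle_ineq[of "\<phi> f" "delta_eval u f"] by linarith
qed

lemma N_le2:
  assumes "subspace X" "\<phi> \<in> dual_sphere X"
  shows "dual_norm X (\<lambda>f. \<phi> f + delta_eval u f) \<le> 2"
  by (rule opnorm_ub[OF assms(1)]) (rule N_bound[OF assms])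

lemma N_ge:
  assumes "subspace X" "\<phi> \<in> dual_sphere X" "f \<in> X" "norm f \<le> 1"
  shows "norm (\<phi> f + delta_eval u f) \<le> dual_norm X (\<lambda>f. \<phi> f + delta_eval u f)"
  by (rule opnorm_lb[where M=2]) (use N_bound[OF assms(1,2)] assms in auto)

lemma N_open:
  assumes "subspace X" "\<phi> \<in> dual_sphere X"
  shows "open {u. c < dual_norm X (\<lambda>f. \<phi> f + delta_eval u f)}"
proof -
  let ?N = "\<lambda>u. dual_norm X (\<lambda>f. \<phi> f + delta_eval u f)"
  have eq: "{u. c < ?N u} = (\<Union>f\<in>{f\<in>X. norm f \<le> 1}. {u. c < norm (\<phi> f + delta_eval u f)})"
  proof (intro equalityI subsetI)
    fix u assume "u \<in> {u. c < ?N u}"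
    then have cu: "c < ?N u" by simp
    have bnd: "\<And>f. f\<in>X \<Longrightarrow> norm f \<le> 1 \<Longrightarrow> norm ((\<lambda>f. \<phi> f + delta_eval u f) f) \<le> 2"
      using N_bound[OF assms] by simp
    have "\<exists>f. f\<in>X \<and> norm f \<le> 1 \<and> ?N u - (?N u - c) < norm (\<phi> f + delta_eval u f)"
      by (rule opnorm_approx[where T="\<lambda>f. \<phi> f + delta_eval u f" and M=2 and e="?N u - c", OF assms(1) bnd])
        (use cu in auto)
    then obtain f where "f\<in>X" "norm f \<le> 1" "?N u - (?N u - c) < norm (\<phi> f + delta_eval u f)" by blast
    then show "u \<in> (\<Union>f\<in>{f\<in>X. norm f \<le> 1}. {u. c < norm (\<phi> f + delta_eval u f)})" by auto
  next
    fix u assume "u \<in> (\<Union>f\<in>{f\<in>X. norm f \<le> 1}. {u. c < norm (\<phi> f + delta_eval u f)})"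
    then obtain f where "f\<in>X" "norm f \<le> 1" "c < norm (\<phi> f + delta_eval u f)" by auto
    then show "u \<in> {u. c < ?N u}" using N_ge[OF assms, of f u] by auto
  qed
  have "open {u. c < norm (\<phi> f + delta_eval u f)}" for f
  proof -
    have "continuous_on UNIV (\<lambda>u. norm (\<phi> f + apply_bcontfun f u))"
      by (intro continuous_intros) auto
    then show ?thesis unfolding delta_eval_def
      by (intro open_Collect_less) (auto intro: continuous_intros)
  qed
  then show ?thesis unfolding eq by blast
qed



lemma B_to_C:
  fixes X :: "('a::t2_space \<Rightarrow>\<^sub>C real) set"
  assumes K: "compact (UNIV :: 'a set)" and sub: "subspace X"
    and hb: "\<forall>\<epsilon>>0. \<forall>\<phi>\<in>dual_sphere X. \<forall>U::'a set. open U \<and> U \<noteq> {} \<longrightarrow>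
                 (\<exists>u\<in>U. dual_norm X (\<lambda>f. \<phi> f + delta_eval u f) > 2 - \<epsilon>)"
    and phi: "\<phi> \<in> dual_sphere X" and U: "open U" "U \<noteq> {}"
  shows "\<exists>G. G \<noteq> {} \<and> G \<subseteq> U \<and> closed G \<and> gdelta_set G \<and>
                      (\<forall>u\<in>G. dual_norm X (\<lambda>f. \<phi> f + delta_eval u f) = 2)"
proof -
  define N where "N u = dual_norm X (\<lambda>f. \<phi> f + delta_eval u f)" for u
  define V where "V n = {u. 2 - 1 / real (Suc n) < N u}" for n
  have Vo: "open (V n)" for n unfolding V_def N_def by (rule N_open[OF sub phi])
  have dense: "\<exists>W. open W \<and> W \<noteq> {} \<and> closure W \<subseteq> S \<inter> V n" if "open S" "S \<noteq> {}" for S n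
  proof -
    have pos: "1 / real (Suc n) > 0" by simp
    have "\<exists>u\<in>S. dual_norm X (\<lambda>f. \<phi> f + delta_eval u f) > 2 - 1 / real (Suc n)"
      using hb[rule_format, OF pos phi] that by simp
    then obtain u where "u \<in> S" "N u > 2 - 1 / real (Suc n)" unfolding N_def by blast
    then have "u \<in> S \<inter> V n" unfolding V_def by auto
    moreover have "open (S \<inter> V n)" using Vo that by auto
    ultimately obtain W where "open W" "u \<in> W" "closure W \<subseteq> S \<inter> V n" using regK[OF K] by blast
    then show ?thesis by blast
  qed
  define step where "step S n = (SOME W. open W \<and> W \<noteq> {} \<and> closure W \<subseteq> S \<inter> V n)" for S n
  have step: "open (step S n) \<and> step S n \<noteq> {} \<and> closure (step S n) \<subseteq> S \<inter> V n" if "open S" "S \<noteq> {}" for S n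
    unfolding step_def by (rule someI_ex) (rule dense[OF that])
  define Ws where "Ws = rec_nat (step U 0) (\<lambda>n S. step S (Suc n))"
  have Ws0: "Ws 0 = step U 0" and WsS: "Ws (Suc n) = step (Ws n) (Suc n)" for n by (simp_all add: Ws_def)
  have P: "open (Ws n) \<and> Ws n \<noteq> {} \<and> closure (Ws n) \<subseteq> V n \<and> closure (Ws n) \<subseteq> U" for n
  proof (induction n)
    case 0
    then show ?case using step[OF U, of 0] Ws0 by auto
  next
    case (Suc n)
    then have "open (Ws (Suc n)) \<and> Ws (Suc n) \<noteq> {} \<and> closure (Ws (Suc n)) \<subseteq> Ws n \<inter> V (Suc n)"
      using step[of "Ws n" "Suc n"] WsS by auto
    moreover have "Ws n \<subseteq> U" using Suc closure_subset by blast
    ultimately show ?case by blast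
  qed
  have sub1: "closure (Ws (Suc n)) \<subseteq> Ws n" for n
    using step[of "Ws n" "Suc n"] WsS P by auto
  have sub2: "closure (Ws (Suc n)) \<subseteq> closure (Ws n)" for n
    using sub1 closure_subset by blast
  have dec: "closure (Ws m) \<subseteq> closure (Ws n)" if "n \<le> m" for n m
    using lift_Suc_antimono_le[of "\<lambda>n. closure (Ws n)", OF sub2 that] .
  define G where "G = (\<Inter>n. closure (Ws n))"
  have "UNIV \<inter> \<Inter>(range (\<lambda>n. closure (Ws n))) \<noteq> {}"
  proof (rule compact_imp_fip[OF K])
    show "closed T" if Tr: "T \<in> range (\<lambda>n. closure (Ws n))" for T
    proof -
      obtain n where "T = closure (Ws n)" using Tr by blast
      then show ?thesis by simp
    qed
    show "UNIV \<inter> \<Inter> F' \<noteq> {}" if Ff: "finite F'" "F' \<subseteq> range (\<lambda>n. closure (Ws n))" for F'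
    proof -
      obtain I where I: "finite I" "F' = (\<lambda>n. closure (Ws n)) ` I"
        using finite_subset_image[OF Ff] by blast
      show ?thesis
      proof (cases "I = {}")
        case True
        then show ?thesis using I by simp
      next
        case False
        have "\<And>n. n \<in> I \<Longrightarrow> closure (Ws (Max I)) \<subseteq> closure (Ws n)"
          using dec[OF Max_ge[OF I(1)]] by simp
        then have "closure (Ws (Max I)) \<subseteq> \<Inter> F'"
          using INT_greatest[of I "closure (Ws (Max I))" "\<lambda>n. closure (Ws n)"] I(2) by simp
        moreover have "closure (Ws (Max I)) \<noteq> {}" using P[of "Max I"] closure_subset[of "Ws (Max I)"] by blast
        ultimately show ?thesis by auto
      qed
    qed
  qed
  then have Gne: "G \<noteq> {}" unfolding G_def by simp
  have "G \<subseteq> closure (Ws 0)" unfolding G_def by blast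
  then have GU: "G \<subseteq> U" using P[of 0] by blast
  have Gc: "closed G" unfolding G_def by auto
  have "G = \<Inter>(range Ws)"
  proof
    show "G \<subseteq> \<Inter>(range Ws)"
    proof
      fix x assume "x \<in> G"
      then have "\<forall>n. x \<in> closure (Ws (Suc n))" unfolding G_def by blast
      then have "\<forall>n. x \<in> Ws n" using sub1 by blast
      then show "x \<in> \<Inter>(range Ws)" by blast
    qed
    show "\<Inter>(range Ws) \<subseteq> G" unfolding G_def using closure_subset by blast
  qed
  moreover have "countable (range Ws)" by simp
  moreover have "\<forall>V\<in>range Ws. open V" using P by blast
  ultimately have Gd: "gdelta_set G" unfolding gdelta_set_def by blast
  have G2: "N u = 2" if "u \<in> G" for u
  proof (rule ccontr)
    assume "N u \<noteq> 2"
    moreover have "N u \<le> 2" unfolding N_def by (rule N_le2[OF sub phi])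
    ultimately have "0 < 2 - N u" by simp
    then obtain n where n: "inverse (real (Suc n)) < 2 - N u" using reals_Archimedean by blast
    have "u \<in> closure (Ws n)" using that unfolding G_def by blast
    then have "u \<in> V n" using P[of n] by blast
    then show False using n unfolding V_def by (simp add: inverse_eq_divide)
  qed
  have "\<forall>u\<in>G. dual_norm X (\<lambda>f. \<phi> f + delta_eval u f) = 2" using G2 unfolding N_def by blast
  then show ?thesis using Gne GU Gc Gd by blast
qed



lemma arith1:
  fixes a b s e :: real
  assumes "\<bar>a\<bar> \<le> 1" "\<bar>b\<bar> \<le> 1" "0 \<le> s" "s \<le> 1" "e < 1" "2 - e < \<bar>b + a * s\<bar>"
  shows "2 - e < \<bar>a + b\<bar>"
proof -
  have h1: "a \<ge> 0 \<Longrightarrow> a * s \<le> a" using assms(4) by (simp add: mult_left_le)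
  have h2: "a \<ge> 0 \<Longrightarrow> 0 \<le> a * s" using assms(3) by simp
  have h3: "a \<le> 0 \<Longrightarrow> a \<le> a * s"
  proof -
    assume "a \<le> 0"
    then have "0 \<le> a * (s - 1)" using assms(4) by (intro mult_nonpos_nonpos) auto
    then show ?thesis by (simp add: algebra_simps)
  qed
  have h4: "a \<le> 0 \<Longrightarrow> a * s \<le> 0" using assms(3) by (simp add: mult_nonpos_nonneg)
  show ?thesis
  proof (cases "a \<ge> 0")
    case True then show ?thesis using h1 h2 assms by linarith
  next
    case False then show ?thesis using h3 h4 assms by linarith
  qed
qed

lemma indep_single: "(y::'b::real_vector) \<noteq> 0 \<Longrightarrow> dim (span {y}) = 1"
proof -
  assume "y \<noteq> 0"
  then have "independent {y}" using independent_insertI[of y "{}"] by simp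
  then show ?thesis using dim_eq_card_independent[of "{y}"] by simp
qed

lemma phi_nonzero:
  assumes "subspace X" "dual_norm X \<phi> = 1"
  obtains x0 where "x0 \<in> X" "\<phi> x0 \<noteq> 0"
proof -
  have "\<exists>x0\<in>X. \<phi> x0 \<noteq> 0"
  proof (rule ccontr)
    assume "\<not> ?thesis"
    then have "dual_norm X \<phi> \<le> 0" by (intro opnorm_ub[OF assms(1)]) auto
    then show False using assms(2) by simp
  qed
  then show ?thesis using that by blast
qed

lemma A_to_B:
  fixes X :: "('a::t2_space \<Rightarrow>\<^sub>C real) set"
  assumes K: "compact (UNIV::'a set)" and sub: "subspace X" and da: "daugavet_pair X"
    and eps: "\<epsilon> > 0" and phi: "\<phi> \<in> dual_sphere X" and U: "open U" "U \<noteq> {}"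
  shows "\<exists>u\<in>U. dual_norm X (\<lambda>f. \<phi> f + delta_eval u f) > 2 - \<epsilon>"
proof -
  define e where "e = min \<epsilon> (1/2)"
  have e: "0 < e" "e \<le> \<epsilon>" "e < 1" using eps by (auto simp: e_def)
  obtain u0 where u0: "u0 \<in> U" using U by blast
  obtain y :: "'a \<Rightarrow>\<^sub>C real" where y: "\<And>t. 0 \<le> y t" "\<And>t. y t \<le> 1" "y u0 = 1" "\<And>t. t \<notin> U \<Longrightarrow> y t = 0"
    using urysohnK[OF K U(1) u0] by blast
  have ny: "norm y = 1"
  proof (rule antisym)
    show "norm y \<le> 1" by (rule norm_bound) (use y in auto)
    show "1 \<le> norm y" using norm_bounded[of y u0] y(3) by simp
  qed
  have phb: "bounded_linear_on_sub X \<phi>" and phn: "dual_norm X \<phi> = 1" using phi by (auto simp: dual_sphere_def)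
  have phl: "linear_on_sub X \<phi>" using phb by (simp add: bounded_linear_on_sub_def)
  have phbd: "\<bar>\<phi> x\<bar> \<le> norm x" if "x \<in> X" for x using bl_bound[OF sub phb that] phn by simp
  define T where "T = (\<lambda>x. \<phi> x *\<^sub>R y)"
  have Tlin: "linear_on_sub X T" unfolding linear_on_sub_def T_def
  proof (intro ballI allI)
    fix x z a b assume "x \<in> X" "z \<in> X"
    then have "\<phi> (a *\<^sub>R x + b *\<^sub>R z) = a * \<phi> x + b * \<phi> z" using phl unfolding linear_on_sub_def by simp
    then show "\<phi> (a *\<^sub>R x + b *\<^sub>R z) *\<^sub>R y = a *\<^sub>R \<phi> x *\<^sub>R y + b *\<^sub>R \<phi> z *\<^sub>R y"
      by (simp add: scaleR_add_left)
  qed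
  have Tb: "bounded_linear_on_sub X T" unfolding bounded_linear_on_sub_def
  proof (intro conjI Tlin exI[of _ 1] ballI)
    fix x assume "x \<in> X" then show "norm (T x) \<le> 1 * norm x" using phbd ny by (simp add: T_def)
  qed
  obtain x0 where x0: "x0 \<in> X" "\<phi> x0 \<noteq> 0" using phi_nonzero[OF sub phn] by blast
  have TX: "T ` X = span {y}"
  proof
    show "T ` X \<subseteq> span {y}" unfolding T_def using span_scale span_base by blast
    show "span {y} \<subseteq> T ` X"
    proof
      fix z assume "z \<in> span {y}"
      then obtain c where c: "z = c *\<^sub>R y" by (auto simp: span_singleton)
      have "(c / \<phi> x0) *\<^sub>R x0 \<in> X" using sub x0 by (simp add: subspace_scale)
      moreover have "T ((c / \<phi> x0) *\<^sub>R x0) = z"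
        using lin_scale[OF phl x0(1)] x0(2) c by (simp add: T_def)
      ultimately show "z \<in> T ` X" by (metis image_eqI)
    qed
  qed
  have y0: "y \<noteq> 0" using ny by auto
  have rk: "rank_one_op X T" unfolding rank_one_op_def using Tb TX indep_single[OF y0] by simp
  then have dq: "opnorm_on X (\<lambda>x. x + T x) = 1 + opnorm_on X T" using da unfolding daugavet_pair_def by blast
  have "opnorm_on X T = opnorm_on X \<phi>" unfolding opnorm_on_def T_def using ny by simp
  then have J2: "opnorm_on X (\<lambda>x. x + T x) = 2" using dq phn by simp
  have bJ: "norm ((\<lambda>x. x + T x) x) \<le> 2" if "x \<in> X" "norm x \<le> 1" for x
  proof -
    have "norm (T x) \<le> 1" using phbd[OF that(1)] that(2) ny by (simp add: T_def)
    then show ?thesis using norm_triangle_ineq[of x "T x"] that(2) by simp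
  qed
  obtain x where x: "x \<in> X" "norm x \<le> 1" "opnorm_on X (\<lambda>x. x + T x) - e < norm ((\<lambda>x. x + T x) x)"
    by (rule opnorm_approx[OF sub bJ e(1)])
  then have x2: "2 - e < norm (x + \<phi> x *\<^sub>R y)" using J2 by (simp add: T_def)
  have "\<exists>t. 2 - e < \<bar>x t + \<phi> x * y t\<bar>"
  proof (rule ccontr)
    assume "\<not> ?thesis"
    then have "\<forall>t. \<bar>x t + \<phi> x * y t\<bar> \<le> 2 - e" by (simp add: not_less)
    then have "norm (x + \<phi> x *\<^sub>R y) \<le> 2 - e" by (intro norm_bound) simp
    then show False using x2 by simp
  qed
  then obtain t where t: "2 - e < \<bar>x t + \<phi> x * y t\<bar>" by blast
  have xt: "\<bar>x t\<bar> \<le> 1" using norm_bounded[of x t] x(2) by simp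
  have px: "\<bar>\<phi> x\<bar> \<le> 1" using phbd[OF x(1)] x(2) by simp
  have tU: "t \<in> U"
  proof (rule ccontr)
    assume "t \<notin> U"
    then have "y t = 0" using y(4) by blast
    then show False using t xt e by simp
  qed
  have "2 - e < \<bar>\<phi> x + x t\<bar>" by (rule arith1[OF px xt y(1) y(2) e(3) t])
  also have "\<dots> = norm (\<phi> x + delta_eval t x)" by (simp add: delta_eval_def)
  also have "\<dots> \<le> dual_norm X (\<lambda>f. \<phi> f + delta_eval t f)" by (rule N_ge[OF sub phi x(1,2)])
  finally show ?thesis using tU e(2) by force
qed



lemma arith2:
  fixes n p q s d :: real
  assumes "n \<ge> 0" "0 < d" "d \<le> 1/2" "p > 1 - d" "s > 1 - d" "q > 1 - d"
  shows "q + n * (p * s) \<ge> 1 + n - d * (1 + 2 * n)"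
proof -
  have "p * s \<ge> (1 - d) * (1 - d)" using assms by (intro mult_mono) auto
  moreover have "(1 - d) * (1 - d) \<ge> 1 - 2 * d" by (simp add: algebra_simps)
  ultimately have "p * s \<ge> 1 - 2 * d" by linarith
  then have "n * (p * s) \<ge> n * (1 - 2 * d)" using assms(1) by (rule mult_left_mono)
  then show ?thesis using assms by (simp add: algebra_simps)
qed

lemma B_to_A:
  fixes X :: "('a::t2_space \<Rightarrow>\<^sub>C real) set"
  assumes K: "compact (UNIV::'a set)" and sub: "subspace X"
    and hb: "\<forall>\<epsilon>>0. \<forall>\<phi>\<in>dual_sphere X. \<forall>U::'a set. open U \<and> U \<noteq> {} \<longrightarrow>
                 (\<exists>u\<in>U. dual_norm X (\<lambda>f. \<phi> f + delta_eval u f) > 2 - \<epsilon>)"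
  shows "daugavet_pair X"
  unfolding daugavet_pair_def
proof (intro allI impI)
  fix T :: "('a \<Rightarrow>\<^sub>C real) \<Rightarrow> ('a \<Rightarrow>\<^sub>C real)"
  assume rk: "rank_one_op X T"
  have Tb: "bounded_linear_on_sub X T" and dim1: "dim (T ` X) = 1" using rk by (auto simp: rank_one_op_def)
  have Tl: "linear_on_sub X T" using Tb by (simp add: bounded_linear_on_sub_def)
  obtain B where B: "B \<subseteq> T ` X" "independent B" "T ` X \<subseteq> span B" "card B = dim (T ` X)"
    by (rule basis_exists)
  then obtain w where w: "B = {w}" using dim1 card_1_singletonE by metis
  have w0: "w \<noteq> 0" using B(2) w dependent_zero by blast
  obtain t0 where t0: "\<forall>t. \<bar>w t\<bar> \<le> \<bar>w t0\<bar>"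
    using continuous_attains_sup[OF K UNIV_not_empty, of "\<lambda>t. \<bar>w t\<bar>"] by (auto intro: continuous_intros)
  have nw: "norm w = \<bar>w t0\<bar>"
  proof (rule antisym)
    show "norm w \<le> \<bar>w t0\<bar>" by (rule norm_bound) (use t0 in auto)
    show "\<bar>w t0\<bar> \<le> norm w" using norm_bounded[of w t0] by simp
  qed
  have wt0: "w t0 \<noteq> 0" using nw w0 by auto
  define y where "y = (1 / w t0) *\<^sub>R w"
  have yt0: "y t0 = 1" using wt0 by (simp add: y_def)
  have ny: "norm y = 1" using nw wt0 by (simp add: y_def)
  have y0: "y \<noteq> 0" using ny by auto
  have exc: "\<exists>c. T x = c *\<^sub>R y" if "x \<in> X" for x
  proof -
    have "T x \<in> span {w}" using B(3) w that by blast
    then obtain c where "T x = c *\<^sub>R w" by (auto simp: span_singleton)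
    then have "T x = (c * w t0) *\<^sub>R y" using wt0 by (simp add: y_def)
    then show ?thesis by blast
  qed
  define \<psi> where "\<psi> x = (SOME c. T x = c *\<^sub>R y)" for x
  have Tpsi: "T x = \<psi> x *\<^sub>R y" if "x \<in> X" for x
    unfolding \<psi>_def by (rule someI_ex[OF exc[OF that]])
  have nT: "norm (T x) = \<bar>\<psi> x\<bar>" if "x \<in> X" for x using Tpsi[OF that] ny by simp
  have psil: "linear_on_sub X \<psi>" unfolding linear_on_sub_def
  proof (intro ballI allI)
    fix x z a b assume xz: "x \<in> X" "z \<in> X"
    then have az: "a *\<^sub>R x + b *\<^sub>R z \<in> X" using sub by (simp add: subspace_add subspace_scale)
    have "\<psi> (a *\<^sub>R x + b *\<^sub>R z) *\<^sub>R y = T (a *\<^sub>R x + b *\<^sub>R z)" using Tpsi[OF az] by simp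
    also have "\<dots> = a *\<^sub>R T x + b *\<^sub>R T z" using Tl xz unfolding linear_on_sub_def by blast
    also have "\<dots> = (a * \<psi> x + b * \<psi> z) *\<^sub>R y" using Tpsi xz by (simp add: scaleR_add_left)
    finally show "\<psi> (a *\<^sub>R x + b *\<^sub>R z) = a *\<^sub>R \<psi> x + b *\<^sub>R \<psi> z" using y0 by simp
  qed
  obtain BB where BB: "\<forall>x\<in>X. norm (T x) \<le> BB * norm x" using Tb unfolding bounded_linear_on_sub_def by blast
  have psib: "bounded_linear_on_sub X \<psi>" unfolding bounded_linear_on_sub_def
    using psil BB nT by (intro conjI exI[of _ BB]) auto
  define n where "n = opnorm_on X \<psi>"
  have nTn: "opnorm_on X T = n"
  proof -
    have "{norm (T x) |x. x \<in> X \<and> norm x \<le> 1} = {norm (\<psi> x) |x. x \<in> X \<and> norm x \<le> 1}"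
      using nT by force
    then show ?thesis unfolding n_def opnorm_on_def by simp
  qed
  have n0: "n \<ge> 0" unfolding n_def by (rule opnorm_nonneg[OF sub psib])
  have npos: "n > 0"
  proof (rule ccontr)
    assume "\<not> n > 0"
    then have "n = 0" using n0 by simp
    then have "\<psi> x = 0" if "x \<in> X" for x using bl_bound[OF sub psib that] unfolding n_def by simp
    then have "T x = 0" if "x \<in> X" for x using Tpsi that by simp
    then have "w = 0" using B(1) w by blast
    then show False using w0 by simp
  qed
  have psibd: "\<bar>\<psi> x\<bar> \<le> n * norm x" if "x \<in> X" for x using bl_bound[OF sub psib that] unfolding n_def by simp
  define \<phi> where "\<phi> x = \<psi> x / n" for x
  have phil: "linear_on_sub X \<phi>" using psil unfolding linear_on_sub_def \<phi>_def by (simp add: add_divide_distrib)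
  have phibd: "\<bar>\<phi> x\<bar> \<le> norm x" if "x \<in> X" for x
    using psibd[OF that] npos by (simp add: \<phi>_def divide_le_eq mult.commute)
  have phib: "bounded_linear_on_sub X \<phi>" unfolding bounded_linear_on_sub_def
    using phil phibd by (intro conjI exI[of _ 1]) auto
  have phin: "dual_norm X \<phi> = 1"
  proof (rule antisym)
    show "dual_norm X \<phi> \<le> 1" by (rule opnorm_ub[OF sub]) (use phibd in force)
    show "1 \<le> dual_norm X \<phi>"
    proof (rule ccontr)
      assume "\<not> 1 \<le> dual_norm X \<phi>"
      then have lt: "dual_norm X \<phi> < 1" by simp
      have "n \<le> n * dual_norm X \<phi>" unfolding n_def
      proof (rule opnorm_ub[OF sub])
        fix x assume x: "x \<in> X" "norm x \<le> 1"
        have "\<bar>\<phi> x\<bar> \<le> dual_norm X \<phi> * norm x" using bl_bound[OF sub phib x(1)] by simp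
        also have "\<dots> \<le> dual_norm X \<phi>" using x(2) opnorm_nonneg[OF sub phib] by (simp add: mult_left_le)
        finally have "\<bar>\<psi> x\<bar> / n \<le> dual_norm X \<phi>" using npos by (simp add: \<phi>_def abs_of_pos)
        then show "norm (\<psi> x) \<le> opnorm_on X \<psi> * dual_norm X \<phi>" using npos by (simp add: n_def divide_le_eq mult.commute)
      qed
      then show False using lt npos by (simp add: mult_less_cancel_left1)
    qed
  qed
  have phis: "\<phi> \<in> dual_sphere X" unfolding dual_sphere_def using phib phin by simp
  have psiphi: "\<psi> x = n * \<phi> x" for x using npos by (simp add: \<phi>_def)
  have bJ: "norm ((\<lambda>x. x + T x) x) \<le> 1 + n" if "x \<in> X" "norm x \<le> 1" for x
  proof -
    have "norm (T x) \<le> n" using nT[OF that(1)] psibd[OF that(1)] that(2) n0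
      by (metis mult_left_le order_trans)
    then show ?thesis using norm_triangle_ineq[of x "T x"] that(2) by simp
  qed
  have up: "opnorm_on X (\<lambda>x. x + T x) \<le> 1 + n" by (rule opnorm_ub[OF sub bJ])
  have low: "1 + n \<le> opnorm_on X (\<lambda>x. x + T x)"
  proof (rule field_le_epsilon)
    fix e :: real assume e: "0 < e"
    define d where "d = min (1/2) (e / (1 + 2 * n))"
    have d12a: "0 < d" using e n0 unfolding d_def by simp
    have d12b: "d \<le> 1/2" unfolding d_def by (rule min.cobounded1)
    note d12 = d12a d12b
    have "d \<le> e / (1 + 2 * n)" by (simp add: d_def)
    then have "d * (1 + 2 * n) \<le> e / (1 + 2 * n) * (1 + 2 * n)" by (rule mult_right_mono) (use n0 in simp)
    also have "\<dots> = e" using n0 by simp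
    finally have d: "0 < d" "d \<le> 1/2" "d * (1 + 2 * n) \<le> e" using d12 by auto
    define U where "U = {t. 1 - d < y t}"
    have Uo: "open U" unfolding U_def by (intro open_Collect_less) (auto intro: continuous_intros)
    have "t0 \<in> U" using yt0 d unfolding U_def by simp
    then have Une: "U \<noteq> {}" by blast
    obtain u where u: "u \<in> U" "dual_norm X (\<lambda>f. \<phi> f + delta_eval u f) > 2 - d"
      using hb[rule_format, OF d(1) phis] Uo Une by blast
    have bnd: "\<And>f. f\<in>X \<Longrightarrow> norm f \<le> 1 \<Longrightarrow> norm ((\<lambda>f. \<phi> f + delta_eval u f) f) \<le> 2"
      using N_bound[OF sub phis] by simp
    have "\<exists>f. f\<in>X \<and> norm f \<le> 1 \<and> dual_norm X (\<lambda>f. \<phi> f + delta_eval u f) - (dual_norm X (\<lambda>f. \<phi> f + delta_eval u f) - (2 - d)) < norm (\<phi> f + delta_eval u f)"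
      by (rule opnorm_approx[where T="\<lambda>f. \<phi> f + delta_eval u f" and M=2 and e="dual_norm X (\<lambda>f. \<phi> f + delta_eval u f) - (2 - d)", OF sub bnd])
        (use u in auto)
    then obtain f where f: "f \<in> X" "norm f \<le> 1" "2 - d < \<bar>\<phi> f + f u\<bar>" by (auto simp: delta_eval_def)
    have "\<exists>x. x \<in> X \<and> norm x \<le> 1 \<and> 2 - d < \<phi> x + x u"
    proof (cases "\<phi> f + f u > 0")
      case True then show ?thesis using f by auto
    next
      case False
      have mf: "- f \<in> X" using sub f(1) by (simp add: subspace_neg)
      have "\<phi> (- f) = - \<phi> f" using lin_scale[OF phil f(1), of "-1"] by simp
      then show ?thesis using f False mf by (intro exI[of _ "- f"]) auto
    qed
    then obtain x where x: "x \<in> X" "norm x \<le> 1" "2 - d < \<phi> x + x u" by blast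
    have p1: "\<bar>\<phi> x\<bar> \<le> 1" using phibd[OF x(1)] x(2) by simp
    have x1: "\<bar>x u\<bar> \<le> 1" using norm_bounded[of x u] x(2) by simp
    have yu: "1 - d < y u" using u(1) unfolding U_def by simp
    have "1 + n - d * (1 + 2 * n) \<le> x u + n * (\<phi> x * y u)"
      by (rule arith2) (use n0 d yu x(3) p1 x1 in auto)
    also have "\<dots> = x u + \<psi> x * y u" by (simp add: psiphi)
    also have "\<dots> \<le> \<bar>(x + T x) u\<bar>" using Tpsi[OF x(1)] by simp
    also have "\<dots> \<le> norm (x + T x)" using norm_bounded[of "x + T x" u] by simp
    also have "\<dots> \<le> opnorm_on X (\<lambda>x. x + T x)" using opnorm_lb[where T="\<lambda>x. x + T x", OF bJ x(1,2)] by simp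
    finally show "1 + n \<le> opnorm_on X (\<lambda>x. x + T x) + e" using d(3) by linarith
  qed
  show "opnorm_on X (\<lambda>x. x + T x) = 1 + opnorm_on X T" using up low nTn by simp
qed


theorem mainTheorem5:
  fixes X :: "('a::t2_space \<Rightarrow>\<^sub>C real) set"
  assumes K_compact: "compact (UNIV :: 'a set)"
    and no_isolated: "\<forall>k::'a. \<not> open {k}"
    and X_subspace: "subspace X"
    and X_closed: "closed X"
  shows "(daugavet_pair X
           \<longleftrightarrow> (\<forall>\<epsilon>>0. \<forall>\<phi>\<in>dual_sphere X. \<forall>U::'a set. open U \<and> U \<noteq> {} \<longrightarrow>
                 (\<exists>u\<in>U. dual_norm X (\<lambda>f. \<phi> f + delta_eval u f) > 2 - \<epsilon>)))
       \<and> (daugavet_pair X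
           \<longleftrightarrow> (\<forall>\<phi>\<in>dual_sphere X. \<forall>U::'a set. open U \<and> U \<noteq> {} \<longrightarrow>
                 (\<exists>G. G \<noteq> {} \<and> G \<subseteq> U \<and> closed G \<and> gdelta_set G \<and>
                      (\<forall>u\<in>G. dual_norm X (\<lambda>f. \<phi> f + delta_eval u f) = 2))))"
proof -
  let ?B = "\<forall>\<epsilon>>0. \<forall>\<phi>\<in>dual_sphere X. \<forall>U::'a set. open U \<and> U \<noteq> {} \<longrightarrow>
                 (\<exists>u\<in>U. dual_norm X (\<lambda>f. \<phi> f + delta_eval u f) > 2 - \<epsilon>)"
  let ?C = "\<forall>\<phi>\<in>dual_sphere X. \<forall>U::'a set. open U \<and> U \<noteq> {} \<longrightarrow>
                 (\<exists>G. G \<noteq> {} \<and> G \<subseteq> U \<and> closed G \<and> gdelta_set G \<and>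
                      (\<forall>u\<in>G. dual_norm X (\<lambda>f. \<phi> f + delta_eval u f) = 2))"
  have AB: "daugavet_pair X \<longleftrightarrow> ?B"
  proof
    assume da: "daugavet_pair X"
    show ?B
    proof (intro allI impI ballI)
      fix \<epsilon> :: real and \<phi> and U :: "'a set"
      assume e: "\<epsilon> > 0" and p: "\<phi> \<in> dual_sphere X" and U: "open U \<and> U \<noteq> {}"
      have U1: "open U" and U2: "U \<noteq> {}" using U by simp_all
      show "\<exists>u\<in>U. dual_norm X (\<lambda>f. \<phi> f + delta_eval u f) > 2 - \<epsilon>"
        by (rule A_to_B[OF K_compact X_subspace da e p U1 U2])
    qed
  next
    assume ?B
    then show "daugavet_pair X" by (rule B_to_A[OF K_compact X_subspace])
  qed
  have BC: "?B \<longleftrightarrow> ?C"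
  proof
    assume hb: ?B
    show ?C
    proof (intro allI impI ballI)
      fix \<phi> and U :: "'a set"
      assume p: "\<phi> \<in> dual_sphere X" and U: "open U \<and> U \<noteq> {}"
      have U1: "open U" and U2: "U \<noteq> {}" using U by simp_all
      show "\<exists>G. G \<noteq> {} \<and> G \<subseteq> U \<and> closed G \<and> gdelta_set G \<and>
                      (\<forall>u\<in>G. dual_norm X (\<lambda>f. \<phi> f + delta_eval u f) = 2)"
        by (rule B_to_C[OF K_compact X_subspace hb p U1 U2])
    qed
  next
    assume hc: ?C
    show ?B
    proof (intro allI impI ballI)
      fix \<epsilon> :: real and \<phi> and U :: "'a set"
      assume e: "\<epsilon> > 0" and p: "\<phi> \<in> dual_sphere X" and U: "open U \<and> U \<noteq> {}"
      obtain G where G: "G \<noteq> {}" "G \<subseteq> U" "\<forall>u\<in>G. dual_norm X (\<lambda>f. \<phi> f + delta_eval u f) = 2"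
        using hc[rule_format, OF p U] by (elim exE conjE) simp
      then obtain u where u: "u \<in> G" by blast
      then have "u \<in> U" using G(2) by (rule subsetD[rotated])
      moreover have "dual_norm X (\<lambda>f. \<phi> f + delta_eval u f) > 2 - \<epsilon>" using G(3) u e by simp
      ultimately show "\<exists>u\<in>U. dual_norm X (\<lambda>f. \<phi> f + delta_eval u f) > 2 - \<epsilon>" by (rule bexI[rotated])
    qed
  qed
  show ?thesis using AB BC by (simp only:)
qed

end
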